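(* Let $d\ge1$, $t\in\mathbb R$, $\epsilon\ge0$, and let $\Phi=(\phi_0,\dots,\phi_d)\in\mathbb R^{d+1}$ satisfy $\max_{x\in[-1,1]}|P(x,\Phi)-s_t(x)|\le\epsilon$. For an integer $r\ge1$ define the concatenated phase sequence $$\Phi^{(r)}:=\big(\phi_0,\phi_1,\dots,\phi_{d-1},\underbrace{\phi_d+\phi_0,\phi_1,\dots,\phi_{d-1}}_{\text{repeated } r-1\text{ times}},\phi_d\big)\in\mathbb R^{rd+1}.$$ Then $\max_{x\in[-1,1]}|P(x,\Phi^{(r)})-s_{rt}(x)|\le r^2\epsilon$.
   Context: For phases $\Phi=(\phi_0,\dots,\phi_D)\in\mathbb R^{D+1}$ and $x\in[-1,1]$, let $W(x):=\begin{pmatrix}x& i\sqrt{1-x^2}\\ i\sqrt{1-x^2}&x\end{pmatrix}$, $Z=\mathrm{diag}(1,-1)$, $U(x,\Phi):=e^{i\phi_0Z}\prod_{j=1}^D\big[W(x)e^{i\phi_jZ}\big]$, and $P(x,\Phi):=\langle0|U(x,\Phi)|0\rangle$ (the upper-left entry). Also $s_t(x):=e^{-itx^2}$. *)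

theory Defs
  imports "HOL-Analysis.Analysis"
begin

type_synonym cmat2 = "complex ^ 2 ^ 2"

definition mat2 :: "complex \<Rightarrow> complex \<Rightarrow> complex \<Rightarrow> complex \<Rightarrow> cmat2" where
  "mat2 a b c d = (\<chi> i j. if i = 1 then (if j = 1 then a else b) else (if j = 1 then c else d))"

definition Wsig :: "real \<Rightarrow> cmat2" where
  "Wsig x = mat2 (complex_of_real x) (\<i> * complex_of_real (sqrt (1 - x\<^sup>2)))
                  (\<i> * complex_of_real (sqrt (1 - x\<^sup>2))) (complex_of_real x)"

text \<open>e^{i phi Z} with Z = diag(1,-1).\<close>
definition expZ :: "real \<Rightarrow> cmat2" where
  "expZ phi = mat2 (cis phi) 0 0 (cis (- phi))"

text \<open>Phase list [phi_0, ..., phi_D];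
  U(x,Phi) = e^{i phi_0 Z} * prod_{j=1}^D (W(x) e^{i phi_j Z}).\<close>
definition Uqsp :: "real \<Rightarrow> real list \<Rightarrow> cmat2" where
  "Uqsp x Phi = expZ (hd Phi) ** foldr (\<lambda>phi M. (Wsig x ** expZ phi) ** M) (tl Phi) (mat 1)"

definition Pqsp :: "real \<Rightarrow> real list \<Rightarrow> complex" where
  "Pqsp x Phi = Uqsp x Phi $ 1 $ 1"

definition s_t :: "real \<Rightarrow> real \<Rightarrow> complex" where
  "s_t t x = exp (- \<i> * complex_of_real (t * x\<^sup>2))"

definition concat_phases :: "nat \<Rightarrow> real list \<Rightarrow> real list" where
  "concat_phases r Phi =
     (let mid = butlast (tl Phi); p0 = hd Phi; pd = last Phi in
      p0 # mid @ concat (replicate (r - 1) ((pd + p0) # mid)) @ [pd])"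

end

theory Submission imports Defs begin

lemma mat2_mult: "mat2 a b c d ** mat2 e f g h = mat2 (a*e+b*g) (a*f+b*h) (c*e+d*g) (c*f+d*h)"
  by (simp add: matrix_matrix_mult_def mat2_def vec_eq_iff forall_2 sum_2)

lemma mat1_mat2: "(mat 1 :: cmat2) = mat2 1 0 0 1"
  by (simp add: mat_def mat2_def vec_eq_iff forall_2)

lemma mat2_11: "mat2 a b c d $ 1 $ 1 = a"
  by (simp add: mat2_def)

definition su2 :: "cmat2 \<Rightarrow> bool" where
  "su2 M \<longleftrightarrow> (\<exists>a b. M = mat2 a b (- cnj b) (cnj a) \<and> a * cnj a + b * cnj b = 1)"

lemma su2_mult: assumes "su2 M" "su2 N" shows "su2 (M ** N)"
proof -
  obtain a b where M: "M = mat2 a b (- cnj b) (cnj a)" "a * cnj a + b * cnj b = 1"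
    using assms(1) su2_def by auto
  obtain c d where N: "N = mat2 c d (- cnj d) (cnj c)" "c * cnj c + d * cnj d = 1"
    using assms(2) su2_def by auto
  have "(a*c - b*cnj d) * cnj (a*c - b*cnj d) + (a*d + b*cnj c) * cnj (a*d + b*cnj c)
     = (a * cnj a + b * cnj b) * (c * cnj c + d * cnj d)"
    by (simp add: algebra_simps)
  with M N show ?thesis unfolding su2_def
    by (intro exI[of _ "a*c - b*cnj d"] exI[of _ "a*d + b*cnj c"]) (simp add: mat2_mult algebra_simps)
qed

lemma su2_one: "su2 (mat 1)"
  unfolding su2_def mat1_mat2 by (intro exI[of _ 1] exI[of _ 0]) simp

lemma su2_expZ: "su2 (expZ p)"
  unfolding su2_def expZ_def
  apply (rule exI[where x="cis p"], rule exI[where x=0])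
  by (simp add: cis_cnj cis_mult)

lemma su2_W: assumes "x \<in> {-1..1}" shows "su2 (Wsig x)"
proof -
  have h: "x^2 \<le> 1" using assms by (simp add: abs_square_le_1 abs_le_iff)
  show ?thesis unfolding su2_def Wsig_def
    apply (rule exI[where x="complex_of_real x"], rule exI[where x="\<i> * complex_of_real (sqrt (1 - x\<^sup>2))"])
    using h apply (simp add: power2_eq_square[symmetric] flip: of_real_mult of_real_power of_real_add)
    apply (simp add: power_mult_distrib flip: of_real_power)
    done
qed

primrec mpow :: "cmat2 \<Rightarrow> nat \<Rightarrow> cmat2" where
  "mpow M 0 = mat 1"
| "mpow M (Suc n) = M ** mpow M n"

lemma su2_mpow: "su2 M \<Longrightarrow> su2 (mpow M n)"
  by (induction n) (auto simp: su2_one su2_mult)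

definition Fx :: "real \<Rightarrow> real list \<Rightarrow> cmat2" where
  "Fx x l = foldr (\<lambda>phi M. (Wsig x ** expZ phi) ** M) l (mat 1)"

lemma foldr_Fx: "foldr (\<lambda>phi M. (Wsig x ** expZ phi) ** M) l M = Fx x l ** M"
  unfolding Fx_def by (induction l) (auto simp: matrix_mul_assoc matrix_mul_lid)

lemma Fx_append: "Fx x (xs @ ys) = Fx x xs ** Fx x ys"
  unfolding Fx_def[of x "xs @ ys"] foldr_append by (simp add: foldr_Fx matrix_mul_rid)

lemma Fx_Cons: "Fx x (p # l) = (Wsig x ** expZ p) ** Fx x l"
  by (simp add: Fx_def)

lemma Fx_Nil: "Fx x [] = mat 1"
  by (simp add: Fx_def)

lemma Fx_rep: "Fx x (concat (replicate n X)) = mpow (Fx x X) n"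
  by (induction n) (simp_all add: Fx_Nil Fx_append)

lemma su2_Fx: "x \<in> {-1..1} \<Longrightarrow> su2 (Fx x l)"
  by (induction l) (auto simp: Fx_Nil Fx_Cons su2_one su2_mult su2_W su2_expZ)

lemma expZ_add: "expZ (p + q) = expZ p ** expZ q"
  by (simp add: expZ_def mat2_mult cis_mult)

lemma mpow_swap: "A ** mpow (B ** A) n ** B = mpow (A ** B) (Suc n)"
proof (induction n)
  case 0 then show ?case by (simp add: matrix_mul_lid matrix_mul_rid)
next
  case (Suc n)
  have "A ** mpow (B ** A) (Suc n) ** B = (A ** B) ** (A ** mpow (B ** A) n ** B)"
    by (simp add: matrix_mul_assoc)
  also have "\<dots> = mpow (A ** B) (Suc (Suc n))" using Suc by simp
  finally show ?case .
qed

lemma U_concat: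
  assumes "length Phi = d + 1" "d \<ge> 1" "r \<ge> 1"
  shows "Uqsp x (concat_phases r Phi) = mpow (Uqsp x Phi) r
     \<and> length (concat_phases r Phi) = r * d + 1"
proof -
  obtain p0 rest where P: "Phi = p0 # rest" using assms by (cases Phi) auto
  have "rest \<noteq> []" using assms P by auto
  then obtain mid pd where R: "rest = mid @ [pd]" by (metis rev_exhaust)
  have len: "length mid = d - 1" using assms P R by simp
  define A where "A = expZ p0 ** Fx x mid"
  define B where "B = Wsig x ** expZ pd"
  have FB: "Fx x [pd] = B" by (simp add: Fx_Cons Fx_Nil B_def matrix_mul_rid)
  have FX: "Fx x ((pd + p0) # mid) = B ** A"
    by (simp add: Fx_Cons A_def B_def expZ_add matrix_mul_assoc)
  have cp: "concat_phases r Phi = p0 # mid @ concat (replicate (r - 1) ((pd + p0) # mid)) @ [pd]"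
    using P R by (simp add: concat_phases_def)
  have "Uqsp x (concat_phases r Phi) = expZ p0 ** (Fx x mid ** (mpow (B ** A) (r - 1) ** B))"
    unfolding cp Uqsp_def by (simp add: foldr_Fx matrix_mul_rid
       Fx_append Fx_rep FX FB)
  also have "\<dots> = A ** mpow (B ** A) (r - 1) ** B" by (simp add: A_def matrix_mul_assoc)
  also have "\<dots> = mpow (A ** B) r" using mpow_swap assms(3) by (metis Suc_diff_1 less_eq_Suc_le One_nat_def)
  also have "A ** B = Uqsp x Phi"
    unfolding P R Uqsp_def by (simp add: foldr_Fx matrix_mul_rid
       Fx_append FB A_def matrix_mul_assoc)
  finally have 1: "Uqsp x (concat_phases r Phi) = mpow (Uqsp x Phi) r" .
  have "length (concat_phases r Phi) = 1 + (d - 1) + (r - 1) * d + 1"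
    unfolding cp using len assms by (simp add: length_concat sum_list_replicate)
  also have "\<dots> = r * d + 1" using assms
    by (cases r) (auto simp: algebra_simps)
  finally show ?thesis using 1 by simp
qed

lemma su2_norm: "a * cnj a + b * cnj b = 1 \<Longrightarrow> cmod a ^ 2 + cmod b ^ 2 = 1"
proof -
  assume h: "a * cnj a + b * cnj b = 1"
  have "complex_of_real (cmod a ^ 2 + cmod b ^ 2) = 1"
  proof -
    have "complex_of_real (cmod a ^ 2 + cmod b ^ 2) = a*cnj a + b*cnj b"
      by (simp only: of_real_add complex_norm_square)
    then show ?thesis using h by simp
  qed
  then show ?thesis using of_real_eq_1_iff by blast
qed

lemma power_bound:
  assumes U: "U = mat2 a b (- cnj b) (cnj a)" "a * cnj a + b * cnj b = 1"
    and as: "cmod (a - s) \<le> e" and s1: "cmod s = 1"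
  shows "\<exists>ak bk. mpow U k = mat2 ak bk (- cnj bk) (cnj ak) \<and> ak * cnj ak + bk * cnj bk = 1
     \<and> cmod bk \<le> real k * cmod b \<and> cmod (ak - s ^ k) \<le> (real k)^2 * e"
proof (induction k)
  case 0 then show ?case
    by (rule exI[where x=1], rule exI[where x=0]) (simp add: mat1_mat2)
next
  case (Suc k)
  then obtain ak bk where K: "mpow U k = mat2 ak bk (- cnj bk) (cnj ak)" "ak * cnj ak + bk * cnj bk = 1"
     "cmod bk \<le> real k * cmod b" "cmod (ak - s ^ k) \<le> (real k)^2 * e" by blast
  have na: "cmod a ^ 2 + cmod b ^ 2 = 1" using su2_norm U(2) .
  have nk: "cmod ak ^ 2 + cmod bk ^ 2 = 1" using su2_norm K(2) .
  have a1: "cmod a \<le> 1" using na by (metis abs_norm_cancel abs_square_le_1 le_add_same_cancel1 zero_le_power2)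
  have ak1: "cmod ak \<le> 1" using nk by (metis abs_norm_cancel abs_square_le_1 le_add_same_cancel1 zero_le_power2)
  have "1 \<le> cmod a + cmod (s - a)" using s1 norm_triangle_ineq[of a "s - a"] by simp
  then have "1 - cmod a \<le> e" using as by (simp add: norm_minus_commute)
  moreover have "cmod b ^ 2 = (1 - cmod a) * (1 + cmod a)" using na by (simp add: algebra_simps power2_eq_square)
  ultimately have b2: "cmod b ^ 2 \<le> 2 * e"
  proof -
    assume h1: "1 - cmod a \<le> e" and h2: "cmod b ^ 2 = (1 - cmod a) * (1 + cmod a)"
    have e0: "e \<ge> 0" using as norm_ge_zero order_trans by blast
    have "(1 - cmod a) * (1 + cmod a) \<le> e * (1 + cmod a)"
      by (rule mult_right_mono) (use h1 in auto)
    moreover have "e * (1 + cmod a) \<le> e * 2" using a1 e0 by (simp add: mult_left_mono)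
    ultimately show ?thesis using h2 by linarith
  qed
  define a' where "a' = a * ak - b * cnj bk"
  define b' where "b' = a * bk + b * cnj ak"
  have M: "mpow U (Suc k) = mat2 a' b' (- cnj b') (cnj a')"
    using K(1) U(1) by (simp add: mat2_mult a'_def b'_def algebra_simps)
  have N: "a' * cnj a' + b' * cnj b' = 1"
  proof -
    have "a' * cnj a' + b' * cnj b' = (a * cnj a + b * cnj b) * (ak * cnj ak + bk * cnj bk)"
      unfolding a'_def b'_def by (simp add: algebra_simps)
    then show ?thesis using U(2) K(2) by simp
  qed
  have "cmod b' \<le> cmod a * cmod bk + cmod b * cmod ak"
    unfolding b'_def by (metis norm_triangle_ineq norm_mult complex_mod_cnj order_trans)
  also have "\<dots> \<le> cmod bk + cmod b"
    using a1 ak1 by (smt (verit) mult_left_le_one_le mult_right_le_one_le norm_ge_zero)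
  also have "\<dots> \<le> real (Suc k) * cmod b" using K(3) by (simp add: algebra_simps)
  finally have B: "cmod b' \<le> real (Suc k) * cmod b" .
  have "a' - s ^ Suc k = a * (ak - s ^ k) + s ^ k * (a - s) - b * cnj bk"
    unfolding a'_def by (simp add: algebra_simps)
  then have "cmod (a' - s ^ Suc k) \<le> cmod a * cmod (ak - s ^ k) + cmod (a - s) + cmod b * cmod bk"
  proof -
    have "cmod (a * (ak - s ^ k) + s ^ k * (a - s) - b * cnj bk)
       \<le> cmod (a * (ak - s ^ k) + s ^ k * (a - s)) + cmod (b * cnj bk)" by (rule norm_triangle_ineq4)
    also have "\<dots> \<le> cmod (a * (ak - s ^ k)) + cmod (s ^ k * (a - s)) + cmod (b * cnj bk)"
      using norm_triangle_ineq by simp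
    also have "\<dots> = cmod a * cmod (ak - s ^ k) + cmod (a - s) + cmod b * cmod bk"
      using s1 by (simp add: norm_mult norm_power)
    finally show ?thesis using \<open>a' - s ^ Suc k = _\<close> by simp
  qed
  also have "\<dots> \<le> (real k)^2 * e + e + real k * cmod b ^ 2"
  proof -
    have "cmod a * cmod (ak - s ^ k) \<le> (real k)^2 * e"
      using a1 K(4) by (smt (verit) mult_left_le_one_le norm_ge_zero)
    moreover have "cmod b * cmod bk \<le> real k * cmod b ^ 2"
      using K(3) mult_left_mono[OF K(3), of "cmod b"] by (simp add: power2_eq_square algebra_simps)
    ultimately show ?thesis using as by linarith
  qed
  also have "\<dots> \<le> (real (Suc k))^2 * e"
  proof -
    have "real k * cmod b ^ 2 \<le> real k * (2 * e)" using b2 by (simp add: mult_left_mono)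
    then show ?thesis by (simp add: power2_eq_square algebra_simps)
  qed
  finally show ?case using M N B by blast
qed

lemma su2_U: "x \<in> {-1..1} \<Longrightarrow> su2 (Uqsp x Phi)"
  unfolding Uqsp_def by (simp add: foldr_Fx matrix_mul_rid su2_mult su2_expZ su2_Fx)

lemma s_norm: "cmod (s_t t x) = 1"
  unfolding s_t_def by (simp add: norm_exp_eq_Re)

lemma s_pow: "s_t t x ^ r = s_t (real r * t) x"
  unfolding s_t_def by (simp flip: exp_of_nat_mult add: algebra_simps)

theorem mainTheorem7:
  fixes d r :: nat and t \<epsilon> :: real and Phi :: "real list"
  assumes "d \<ge> 1" and "\<epsilon> \<ge> 0" and "length Phi = d + 1"
    and "\<forall>x\<in>{-1..1::real}. cmod (Pqsp x Phi - s_t t x) \<le> \<epsilon>"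
    and "r \<ge> 1"
  shows "length (concat_phases r Phi) = r * d + 1 \<and>
         (\<forall>x\<in>{-1..1::real}. cmod (Pqsp x (concat_phases r Phi) - s_t (real r * t) x)
              \<le> (real r)\<^sup>2 * \<epsilon>)"
proof (intro conjI ballI)
  show "length (concat_phases r Phi) = r * d + 1" using U_concat assms by blast
next
  fix x :: real assume x: "x \<in> {-1..1}"
  obtain a b where U: "Uqsp x Phi = mat2 a b (- cnj b) (cnj a)" "a * cnj a + b * cnj b = 1"
    using su2_U[OF x] su2_def by blast
  have "cmod (a - s_t t x) \<le> \<epsilon>" using bspec[OF assms(4) x] U(1) by (simp add: Pqsp_def mat2_11)
  from power_bound[OF U this s_norm, of r] obtain ak bk where
    K: "mpow (Uqsp x Phi) r = mat2 ak bk (- cnj bk) (cnj ak)" "cmod (ak - s_t t x ^ r) \<le> (real r)^2 * \<epsilon>"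
    by blast
  have "Pqsp x (concat_phases r Phi) = ak"
    using U_concat[OF assms(3,1,5)] K(1) by (simp add: Pqsp_def mat2_11)
  then show "cmod (Pqsp x (concat_phases r Phi) - s_t (real r * t) x) \<le> (real r)\<^sup>2 * \<epsilon>"
    using K(2) by (simp add: s_pow)
qed

end
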